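(* Let $f$ be a real quadratic form on $\mathbb R^n$. Then (1) at least one of the sets $\mathrm{St}(f)$ and $\widetilde C(f)$ is empty; (2) at least one of the sets $C(f)$ and $\widetilde{\mathrm{St}}(f)$ is empty.
   Context: $H_n=\{x\in\mathbb R^n:\sum x_i=0\}$. $C^-(f)=\{h\in H_n\setminus\{0\}: \partial f/\partial x_i(h)\le0\ \forall i\}$, $C^+(f)$ likewise with $\ge0$, $C(f)=C^+(f)\cup C^-(f)$. $\widetilde C(f)=\{v\in C(f):\ (\partial f/\partial x_1(v),\dots,\partial f/\partial x_n(v))\ne 0\}$. $\mathrm{St}(f)=\{a\in\mathbb R^n: a_i>0\ \forall i,\ \partial f/\partial x_i(a)=\partial f/\partial x_j(a)\ \forall i,j\}$. $P_n=\{x:x_i>0,\ \sum x_i=1\}$, $\overline P_n=\{x: x_i\ge0,\ \sum x_i=1\}$. A vector $u\in P_n$ is $P$-faithful for $f$ if $f(u)>0$ and $f(u)\le f(w)$ for all $w\in\overline P_n$, with $f(u)<f(w)$ whenever $w\in\overline P_n\setminus P_n$; $\widetilde{\mathrm{St}}(f)$ is the set of $P$-faithful vectors. *)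

theory Defs
  imports "HOL-Analysis.Analysis"
begin

definition quadratic_form :: "(real^'n \<Rightarrow> real) \<Rightarrow> bool" where
  "quadratic_form f \<longleftrightarrow> (\<exists>A :: real^'n^'n. \<forall>x. f x = (\<Sum>i\<in>UNIV. \<Sum>j\<in>UNIV. A$i$j * x$i * x$j))"

definition pd :: "(real^'n \<Rightarrow> real) \<Rightarrow> 'n \<Rightarrow> real^'n \<Rightarrow> real" where
  "pd f i x = deriv (\<lambda>t. f (x + t *\<^sub>R axis i 1)) 0"

definition Hn :: "(real^'n) set" where
  "Hn = {x. (\<Sum>i\<in>UNIV. x$i) = 0}"

definition Cminus :: "(real^'n \<Rightarrow> real) \<Rightarrow> (real^'n) set" where
  "Cminus f = {h \<in> Hn - {0}. \<forall>i. pd f i h \<le> 0}"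

definition Cplus :: "(real^'n \<Rightarrow> real) \<Rightarrow> (real^'n) set" where
  "Cplus f = {h \<in> Hn - {0}. \<forall>i. pd f i h \<ge> 0}"

definition Cset :: "(real^'n \<Rightarrow> real) \<Rightarrow> (real^'n) set" where
  "Cset f = Cplus f \<union> Cminus f"

definition Ctilde :: "(real^'n \<Rightarrow> real) \<Rightarrow> (real^'n) set" where
  "Ctilde f = {v \<in> Cset f. (\<chi> i. pd f i v) \<noteq> 0}"

definition St :: "(real^'n \<Rightarrow> real) \<Rightarrow> (real^'n) set" where
  "St f = {a. (\<forall>i. a$i > 0) \<and> (\<forall>i j. pd f i a = pd f j a)}"

definition Pn :: "(real^'n) set" where
  "Pn = {x. (\<forall>i. x$i > 0) \<and> (\<Sum>i\<in>UNIV. x$i) = 1}"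

definition Pbar :: "(real^'n) set" where
  "Pbar = {x. (\<forall>i. x$i \<ge> 0) \<and> (\<Sum>i\<in>UNIV. x$i) = 1}"

definition P_faithful :: "(real^'n \<Rightarrow> real) \<Rightarrow> real^'n \<Rightarrow> bool" where
  "P_faithful f u \<longleftrightarrow> u \<in> Pn \<and> f u > 0 \<and> (\<forall>w\<in>Pbar. f u \<le> f w)
     \<and> (\<forall>w\<in>Pbar - Pn. f u < f w)"

definition St_tilde :: "(real^'n \<Rightarrow> real) \<Rightarrow> (real^'n) set" where
  "St_tilde f = {u. P_faithful f u}"

end

theory Submission
  imports Defs
begin

definition gq :: "real^'n^'n \<Rightarrow> 'n \<Rightarrow> real^'n \<Rightarrow> real" where
  "gq A i x = (\<Sum>j\<in>UNIV. (A$i$j + A$j$i) * x$j)"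

definition fq :: "real^'n^'n \<Rightarrow> real^'n \<Rightarrow> real" where
  "fq A x = (\<Sum>i\<in>UNIV. \<Sum>j\<in>UNIV. A$i$j * x$i * x$j)"

lemma gq_pair: "(\<Sum>i\<in>UNIV. h$i * gq A i x) = (\<Sum>i\<in>UNIV. \<Sum>j\<in>UNIV. A$i$j * x$i * h$j + A$i$j * h$i * x$j)"
proof -
  have "(\<Sum>i\<in>UNIV. h$i * gq A i x) = (\<Sum>i\<in>UNIV. \<Sum>j\<in>UNIV. A$i$j * h$i * x$j) + (\<Sum>i\<in>UNIV. \<Sum>j\<in>UNIV. A$j$i * h$i * x$j)"
    unfolding gq_def by (simp add: sum_distrib_left sum.distrib[symmetric] algebra_simps)
  also have "(\<Sum>i\<in>UNIV. \<Sum>j\<in>UNIV. A$j$i * h$i * x$j) = (\<Sum>i\<in>UNIV. \<Sum>j\<in>UNIV. A$i$j * x$i * h$j)"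
    by (subst sum.swap) (simp add: algebra_simps)
  finally show ?thesis by (simp add: sum.distrib algebra_simps)
qed

lemma gq_sym: "(\<Sum>i\<in>UNIV. h$i * gq A i x) = (\<Sum>i\<in>UNIV. x$i * gq A i h)"
  unfolding gq_pair by (simp add: algebra_simps sum.distrib)

lemma gq_self: "(\<Sum>i\<in>UNIV. h$i * gq A i h) = 2 * fq A h"
  unfolding gq_pair fq_def by (simp add: algebra_simps sum.distrib sum_distrib_left)

lemma fq_expand: "fq A (x + t *\<^sub>R h) = fq A x + t * (\<Sum>i\<in>UNIV. h$i * gq A i x) + t^2 * fq A h"
proof -
  have "fq A (x + t *\<^sub>R h) = (\<Sum>i\<in>UNIV. \<Sum>j\<in>UNIV. A$i$j * x$i * x$j + t * (A$i$j * x$i * h$j + A$i$j * h$i * x$j) + t^2 * (A$i$j * h$i * h$j))"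
    unfolding fq_def by (intro sum.cong refl) (simp add: algebra_simps power2_eq_square)
  also have "\<dots> = fq A x + t * (\<Sum>i\<in>UNIV. \<Sum>j\<in>UNIV. A$i$j * x$i * h$j + A$i$j * h$i * x$j) + t^2 * fq A h"
    unfolding fq_def by (simp add: sum.distrib sum_distrib_left distrib_left)
  finally show ?thesis unfolding gq_pair .
qed

lemma fq_deriv: "((\<lambda>t. fq A (x + t *\<^sub>R h)) has_real_derivative (\<Sum>i\<in>UNIV. h$i * gq A i x)) (at 0)"
proof -
  have "((\<lambda>t. fq A x + t * (\<Sum>i\<in>UNIV. h$i * gq A i x) + t^2 * fq A h) has_real_derivative
      (\<Sum>i\<in>UNIV. h$i * gq A i x)) (at 0)"
    by (auto intro!: derivative_eq_intros)
  then show ?thesis unfolding fq_expand by simp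
qed

lemma pd_gq: "pd (fq A) i x = gq A i x"
proof -
  have "(\<Sum>k\<in>UNIV. axis i 1 $ k * gq A k x) = gq A i x"
  proof -
    have "\<And>k. axis i 1 $ k * gq A k x = (if k = i then gq A i x else 0)"
      by (simp add: axis_def)
    then show ?thesis by simp
  qed
  then show ?thesis unfolding pd_def using fq_deriv[of A x "axis i 1"]
    by (metis DERIV_imp_deriv)
qed



lemma part1:
  fixes A :: "real^'n^'n"
  assumes a: "\<forall>i. a$i > 0" "\<forall>i j. gq A i a = gq A j a"
    and v: "(\<Sum>i\<in>UNIV. v$i) = 0" "(\<forall>i. gq A i v \<ge> 0) \<or> (\<forall>i. gq A i v \<le> 0)"
    and k: "gq A k v \<noteq> 0"
  shows False
proof -
  have "(\<Sum>i\<in>UNIV. a$i * gq A i v) = (\<Sum>i\<in>UNIV. v$i * gq A i a)" by (rule gq_sym)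
  also have "\<dots> = (\<Sum>i\<in>UNIV. v$i * gq A k a)" using a(2) by metis
  also have "\<dots> = 0" using v(1) by (simp add: sum_distrib_right[symmetric])
  finally have s: "(\<Sum>i\<in>UNIV. a$i * gq A i v) = 0" .
  from v(2) show False
  proof
    assume h: "\<forall>i. gq A i v \<ge> 0"
    have p1: "0 < a$k * gq A k v" using a h k by (metis less_eq_real_def mult_pos_pos)
    have p2: "\<And>i. 0 \<le> a$i * gq A i v" using a h by (metis less_imp_le mult_nonneg_nonneg)
    have "0 < (\<Sum>i\<in>UNIV. a$i * gq A i v)"
      by (rule sum_pos2[of _ k]) (use p1 p2 in auto)
    with s show False by simp
  next
    assume h: "\<forall>i. gq A i v \<le> 0"
    have p1: "0 < a$k * - gq A k v" using a h k
      by (metis less_eq_real_def mult_pos_pos neg_0_less_iff_less)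
    have p2: "\<And>i. 0 \<le> a$i * - gq A i v" using a h by (metis less_imp_le mult_nonneg_nonneg neg_0_le_iff_le)
    have "0 < (\<Sum>i\<in>UNIV. a$i * - gq A i v)"
      by (rule sum_pos2[of _ k]) (use p1 p2 in auto)
    with s show False by (simp add: sum_negf)
  qed
qed


lemma sum_comb: "(\<Sum>i\<in>UNIV. (u + t *\<^sub>R h)$i) = (\<Sum>i\<in>UNIV. u$i) + t * (\<Sum>i\<in>UNIV. h$i)"
  by (simp add: sum.distrib sum_distrib_left)

lemma part2:
  fixes A :: "real^'n^'n"
  assumes u: "\<forall>i. u$i > 0" "(\<Sum>i\<in>UNIV. u$i) = 1"
    and mn: "\<forall>w\<in>Pbar. fq A u \<le> fq A w"
    and st: "\<forall>w\<in>Pbar - Pn. fq A u < fq A w"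
    and h: "(\<Sum>i\<in>UNIV. h$i) = 0" "h \<noteq> 0" "(\<forall>i. gq A i h \<ge> 0) \<or> (\<forall>i. gq A i h \<le> 0)"
  shows False
proof -
  define m where "m = Min (range (\<lambda>i. u$i))"
  have m_in: "m \<in> range (\<lambda>i. u$i)" unfolding m_def by (intro Min_in) auto
  have m_pos: "m > 0" using m_in u(1) by auto
  have m_le: "\<And>i. m \<le> u$i" unfolding m_def by (intro Min_le) auto
  define d where "d = m / (norm h + 1)"
  have d_pos: "d > 0" unfolding d_def using norm_ge_zero[of h] by (intro divide_pos_pos m_pos) linarith
  have dn: "d * norm h < m"
  proof -
    have "d * norm h = m * (norm h / (norm h + 1))" unfolding d_def by simp
    also have "\<dots> < m * 1" proof (intro mult_strict_left_mono m_pos)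
      have "norm h + 1 > 0" using norm_ge_zero[of h] by linarith
      then show "norm h / (norm h + 1) < 1" by (simp add: divide_less_eq)
    qed
    finally show ?thesis by simp
  qed
  define p where "p = (\<Sum>i\<in>UNIV. h$i * gq A i u)"
  have loc: "\<forall>y. \<bar>0 - y\<bar> < d \<longrightarrow> fq A (u + 0 *\<^sub>R h) \<le> fq A (u + y *\<^sub>R h)"
  proof (intro allI impI)
    fix y :: real assume "\<bar>0 - y\<bar> < d"
    then have y: "\<bar>y\<bar> < d" by simp
    have "u + y *\<^sub>R h \<in> Pbar"
      unfolding Pbar_def
    proof (intro CollectI conjI allI)
      fix i
      have "\<bar>y * h$i\<bar> \<le> d * norm h"
        unfolding abs_mult using y component_le_norm_cart[of h i]
        by (intro mult_mono) auto
      then have "\<bar>y * h$i\<bar> < u$i" using dn m_le[of i] by linarith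
      then show "0 \<le> (u + y *\<^sub>R h)$i" by simp
    next
      show "(\<Sum>i\<in>UNIV. (u + y *\<^sub>R h)$i) = 1" unfolding sum_comb using u h by simp
    qed
    then show "fq A (u + 0 *\<^sub>R h) \<le> fq A (u + y *\<^sub>R h)" using mn by simp
  qed
  have p0: "p = 0" unfolding p_def
    by (rule DERIV_local_min[OF fq_deriv d_pos loc])
  have s: "(\<Sum>i\<in>UNIV. u$i * gq A i h) = 0" using p0 unfolding p_def gq_sym .
  have gz: "\<forall>i. gq A i h = 0"
    using h(3)
  proof
    assume hh: "\<forall>i. gq A i h \<ge> 0"
    have "\<forall>i\<in>UNIV. u$i * gq A i h = 0"
      using s hh u(1) by (subst sum_nonneg_eq_0_iff[symmetric]) (auto intro: mult_nonneg_nonneg less_imp_le)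
    then show ?thesis using u(1) by (metis UNIV_I less_irrefl mult_eq_0_iff)
  next
    assume hh: "\<forall>i. gq A i h \<le> 0"
    have s': "(\<Sum>i\<in>UNIV. u$i * - gq A i h) = 0" using s by (simp add: sum_negf)
    have "\<forall>i\<in>UNIV. u$i * - gq A i h = 0"
      using s' hh u(1) by (subst sum_nonneg_eq_0_iff[symmetric]) (auto intro: mult_nonneg_nonpos less_imp_le)
    then show ?thesis using u(1) by (metis UNIV_I less_irrefl mult_eq_0_iff neg_equal_0_iff_equal)
  qed
  have fh: "fq A h = 0" using gq_self[of h A] gz by simp
  have p0': "(\<Sum>i\<in>UNIV. h$i * gq A i u) = 0" using p0 p_def by simp
  have const: "\<And>t. fq A (u + t *\<^sub>R h) = fq A u" unfolding fq_expand p0' fh by simp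
  define S where "S = {i. h$i < 0}"
  have S_ne: "S \<noteq> {}"
  proof
    assume "S = {}"
    then have nn: "\<forall>i. h$i \<ge> 0" unfolding S_def by (auto simp: not_less)
    then have "\<forall>i\<in>UNIV. h$i = 0" using h(1) by (subst sum_nonneg_eq_0_iff[symmetric]) auto
    then have "h = 0" by (simp add: vec_eq_iff)
    with h(2) show False by simp
  qed
  define T where "T = Min ((\<lambda>i. u$i / - h$i) ` S)"
  have "T \<in> (\<lambda>i. u$i / - h$i) ` S" unfolding T_def using S_ne by (intro Min_in) auto
  then obtain k where k: "k \<in> S" "T = u$k / - h$k" by auto
  have T_le: "\<And>i. i \<in> S \<Longrightarrow> T \<le> u$i / - h$i" unfolding T_def by (intro Min_le) auto
  have T_pos: "T > 0" using k u(1) unfolding S_def by (simp add: divide_pos_neg)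
  define w where "w = u + T *\<^sub>R h"
  have wP: "w \<in> Pbar"
    unfolding Pbar_def
  proof (intro CollectI conjI allI)
    fix i
    show "0 \<le> w$i"
    proof (cases "i \<in> S")
      case True
      then have hi: "- h$i > 0" unfolding S_def by simp
      have "T * (- h$i) \<le> u$i" proof -
        have "T * (- h$i) \<le> (u$i / - h$i) * (- h$i)"
          using T_le[OF True] hi by (intro mult_right_mono) auto
        then show ?thesis using hi by simp
      qed
      then show ?thesis unfolding w_def by simp
    next
      case False
      then have "h$i \<ge> 0" unfolding S_def by simp
      then show ?thesis unfolding w_def using T_pos u(1) by (simp add: add_pos_nonneg less_imp_le)
    qed
  next
    show "(\<Sum>i\<in>UNIV. w$i) = 1" unfolding w_def sum_comb using u h by simp
  qed
  have "w$k = 0" using k unfolding w_def S_def by simp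
  then have "w \<notin> Pn" unfolding Pn_def by (metis (mono_tags, lifting) less_irrefl mem_Collect_eq)
  with wP st have "fq A u < fq A w" by blast
  with const show False unfolding w_def by simp
qed


theorem proposition1:
  fixes f :: "real^'n \<Rightarrow> real"
  assumes "quadratic_form f"
  shows "(St f = {} \<or> Ctilde f = {}) \<and> (Cset f = {} \<or> St_tilde f = {})"
proof -
  obtain A :: "real^'n^'n" where fA: "f = fq A"
    using assms unfolding quadratic_form_def fq_def by blast
  have pdf: "\<And>i x. pd f i x = gq A i x" unfolding fA by (rule pd_gq)
  have c1: "St f = {} \<or> Ctilde f = {}"
  proof (rule ccontr)
    assume "\<not> (St f = {} \<or> Ctilde f = {})"
    then obtain a v where a: "a \<in> St f" and v: "v \<in> Ctilde f" by blast
    from a have a1: "\<forall>i. a$i > 0" "\<forall>i j. gq A i a = gq A j a" unfolding St_def pdf by auto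
    from v have v1: "(\<Sum>i\<in>UNIV. v$i) = 0" "(\<forall>i. gq A i v \<ge> 0) \<or> (\<forall>i. gq A i v \<le> 0)"
      unfolding Ctilde_def Cset_def Cplus_def Cminus_def Hn_def pdf by auto
    from v have "(\<chi> i. gq A i v) \<noteq> 0" unfolding Ctilde_def pdf by auto
    then obtain k where "gq A k v \<noteq> 0" by (auto simp: vec_eq_iff)
    then show False using part1[OF a1 v1] by blast
  qed
  have c2: "Cset f = {} \<or> St_tilde f = {}"
  proof (rule ccontr)
    assume "\<not> (Cset f = {} \<or> St_tilde f = {})"
    then obtain h u where h: "h \<in> Cset f" and u: "u \<in> St_tilde f" by blast
    from u have u1: "\<forall>i. u$i > 0" "(\<Sum>i\<in>UNIV. u$i) = 1"
      "\<forall>w\<in>Pbar. fq A u \<le> fq A w" "\<forall>w\<in>Pbar - Pn. fq A u < fq A w"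
      unfolding St_tilde_def P_faithful_def Pn_def fA by auto
    from h have h1: "(\<Sum>i\<in>UNIV. h$i) = 0" "h \<noteq> 0" "(\<forall>i. gq A i h \<ge> 0) \<or> (\<forall>i. gq A i h \<le> 0)"
      unfolding Cset_def Cplus_def Cminus_def Hn_def pdf by auto
    show False using part2[OF u1 h1] .
  qed
  show ?thesis using c1 c2 by blast
qed

end
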